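(* Let $\mathbb S$ be the free semigroup action on the compact metric space $X$ generated by continuous maps $g_1,\dots,g_p$ with $p\ge2$. Then every point of $\Sigma_p^+\times X$ is an entropy point of $\mathcal F_G$, i.e. $E_p(\Sigma_p^+\times X,\mathcal F_G)=\Sigma_p^+\times X$.
   Context: $\Sigma_p^+=\{1,\dots,p\}^{\mathbb N}$ with metric $D(\omega,\omega')=p^{-\min\{n:\omega_n\ne\omega'_n\}}$ and shift $\sigma$; $\mathcal F_G(\omega,x)=(\sigma\omega,g_{\omega_1}(x))$ on $\Sigma_p^+\times X$ with metric $\max(D,d)$. For $Z\subset\Sigma_p^+\times X$, $h_{top}(Z,\mathcal F_G)=\lim_{\varepsilon\to0}\limsup_n\frac1n\log s_n(Z,\varepsilon)$, with $s_n(Z,\varepsilon)$ the maximal cardinality of an $(n,\varepsilon)$-separated subset of $Z$ for $\mathcal F_G$. A point $z$ is an entropy point of $\mathcal F_G$ if $h_{top}(F,\mathcal F_G)>0$ for every closed neighbourhood $F$ of $z$; $E_p(\Sigma_p^+\times X,\mathcal F_G)$ is the set of such points. *)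

theory Defs
  imports "HOL-Analysis.Analysis"
begin

text \<open>A sequence \<omega> = (\<omega>_1, \<omega>_2, ...) is represented
  as a function nat => nat with \<omega> 0 = \<omega>_1, \<omega> 1 = \<omega>_2, etc. (0-based storage).\<close>

definition Sigma_p :: "nat \<Rightarrow> (nat \<Rightarrow> nat) set" where
  "Sigma_p p = {\<omega>. \<forall>n. \<omega> n \<in> {1..p}}"

text \<open>D(\<omega>,\<omega>') = p^(-min{n : \<omega>_n \<noteq> \<omega>'_n}) with 1-based n; with 0-based storage the
  first differing paper index is (LEAST k. \<omega> k \<noteq> \<omega>' k) + 1.\<close>
definition shift_dist :: "nat \<Rightarrow> (nat \<Rightarrow> nat) \<Rightarrow> (nat \<Rightarrow> nat) \<Rightarrow> real" where
  "shift_dist p \<omega> \<omega>' =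
     (if \<omega> = \<omega>' then 0 else real p powr (- (real (LEAST k. \<omega> k \<noteq> \<omega>' k) + 1)))"

definition shift :: "(nat \<Rightarrow> nat) \<Rightarrow> (nat \<Rightarrow> nat)" where
  "shift \<omega> = (\<lambda>n. \<omega> (Suc n))"

definition skew :: "(nat \<Rightarrow> 'a \<Rightarrow> 'a) \<Rightarrow> (nat \<Rightarrow> nat) \<times> 'a \<Rightarrow> (nat \<Rightarrow> nat) \<times> 'a" where
  "skew g z = (shift (fst z), g (fst z 0) (snd z))"

definition prod_dist :: "nat \<Rightarrow> (nat \<Rightarrow> nat) \<times> 'a::metric_space \<Rightarrow> (nat \<Rightarrow> nat) \<times> 'a \<Rightarrow> real" where
  "prod_dist p z w = max (shift_dist p (fst z) (fst w)) (dist (snd z) (snd w))"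

definition separated :: "('b \<Rightarrow> 'b \<Rightarrow> real) \<Rightarrow> ('b \<Rightarrow> 'b) \<Rightarrow> nat \<Rightarrow> real \<Rightarrow> 'b set \<Rightarrow> bool" where
  "separated d T n \<epsilon> E =
     (\<forall>x\<in>E. \<forall>y\<in>E. x \<noteq> y \<longrightarrow> (\<exists>k<n. d ((T ^^ k) x) ((T ^^ k) y) > \<epsilon>))"

text \<open>s_n(Z,\<epsilon>): maximal cardinality of an (n,\<epsilon>)-separated subset of Z (as an extended real,
  so that it is well defined even if unbounded).\<close>
definition sep_num :: "('b \<Rightarrow> 'b \<Rightarrow> real) \<Rightarrow> ('b \<Rightarrow> 'b) \<Rightarrow> 'b set \<Rightarrow> nat \<Rightarrow> real \<Rightarrow> ereal" where
  "sep_num d T Z n \<epsilon> =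
     Sup {ereal (real (card E)) | E. finite E \<and> E \<subseteq> Z \<and> separated d T n \<epsilon> E}"

definition ln_ereal :: "ereal \<Rightarrow> ereal" where
  "ln_ereal x = (if x = \<infinity> then \<infinity> else if x \<le> 0 then -\<infinity> else ereal (ln (real_of_ereal x)))"

definition htop :: "('b \<Rightarrow> 'b \<Rightarrow> real) \<Rightarrow> ('b \<Rightarrow> 'b) \<Rightarrow> 'b set \<Rightarrow> ereal" where
  "htop d T Z =
     Lim (at_right 0) (\<lambda>\<epsilon>. limsup (\<lambda>n. ln_ereal (sep_num d T Z n \<epsilon>) / ereal (real n)))"

definition entropy_points :: "'b set \<Rightarrow> ('b \<Rightarrow> 'b \<Rightarrow> real) \<Rightarrow> ('b \<Rightarrow> 'b) \<Rightarrow> 'b set" where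
  "entropy_points S d T =
     {z \<in> S. \<forall>F. closedin (Metric_space.mtopology S d) F \<and>
                 (\<exists>U. openin (Metric_space.mtopology S d) U \<and> z \<in> U \<and> U \<subseteq> F)
                 \<longrightarrow> htop d T F > 0}"

end

theory Submission
  imports Defs
begin

lemma mtop_ball:
  assumes MS: "Metric_space M d" and "openin (Metric_space.mtopology M d) U" "z \<in> U"
  shows "\<exists>r>0. Metric_space.mball M d z r \<subseteq> U"
  using assms Metric_space.openin_mtopology[OF MS] by blast

lemma ln_ereal_mono: "x \<le> y \<Longrightarrow> ln_ereal x \<le> ln_ereal y"
  by (cases x; cases y) (auto simp: ln_ereal_def)

lemma shift_dist_sym: "shift_dist p a b = shift_dist p b a"
  unfolding shift_dist_def by (simp add: eq_commute)

lemma shift_dist_nonneg: "shift_dist p a b \<ge> 0"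
  unfolding shift_dist_def by simp

lemma shift_dist_zero: "p \<ge> 2 \<Longrightarrow> shift_dist p a b = 0 \<longleftrightarrow> a = b"
  unfolding shift_dist_def by simp

lemma least_ge_min:
  assumes "a \<noteq> c" "a \<noteq> b" "b \<noteq> c"
  shows "min (LEAST k. a k \<noteq> b k) (LEAST k. b k \<noteq> c k) \<le> (LEAST k. a k \<noteq> (c::nat\<Rightarrow>nat) k)"
proof (rule ccontr)
  let ?k = "LEAST k. a k \<noteq> c k"
  assume "\<not> ?thesis"
  then have "?k < (LEAST k. a k \<noteq> b k)" "?k < (LEAST k. b k \<noteq> c k)" by auto
  then have "a ?k = b ?k" "b ?k = c ?k" using not_less_Least by blast+
  moreover have "a ?k \<noteq> c ?k"
  proof -
    from assms(1) obtain j where "a j \<noteq> c j" by auto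
    then show ?thesis by (rule LeastI)
  qed
  ultimately show False by simp
qed

lemma shift_dist_ultra:
  assumes "p \<ge> 2"
  shows "shift_dist p a c \<le> max (shift_dist p a b) (shift_dist p b c)"
proof (cases "a = c")
  case True
  then have "shift_dist p a c = 0" by (simp add: shift_dist_def)
  then show ?thesis using shift_dist_nonneg[of p a b] by (metis max.coboundedI1)
next
  case ac: False
  show ?thesis
  proof (cases "a = b")
    case True then show ?thesis by simp
  next
    case ab: False
    show ?thesis
    proof (cases "b = c")
      case True then show ?thesis by simp
    next
      case bc: False
      let ?i = "LEAST k. a k \<noteq> b k" and ?j = "LEAST k. b k \<noteq> c k" and ?k = "LEAST k. a k \<noteq> c k"
      have m: "min ?i ?j \<le> ?k" using least_ge_min[OF ac ab bc] .
      have p1: "real p \<ge> 1" using assms by simp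
      show ?thesis
      proof (cases "?i \<le> ?j")
        case True
        then have "real p powr (- (real ?k + 1)) \<le> real p powr (- (real ?i + 1))"
          using m p1 by (intro powr_mono) auto
        then show ?thesis using ac ab bc unfolding shift_dist_def by simp
      next
        case False
        then have "real p powr (- (real ?k + 1)) \<le> real p powr (- (real ?j + 1))"
          using m p1 by (intro powr_mono) auto
        then show ?thesis using ac ab bc unfolding shift_dist_def by simp
      qed
    qed
  qed
qed

lemma MS:
  assumes "p \<ge> 2"
  shows "Metric_space (Sigma_p p \<times> (X::'a::metric_space set)) (prod_dist p)"
proof
  fix x y :: "(nat \<Rightarrow> nat) \<times> 'a"
  show "0 \<le> prod_dist p x y" unfolding prod_dist_def
    using shift_dist_nonneg[of p "fst x" "fst y"] by (metis max.coboundedI1)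
  show "prod_dist p x y = prod_dist p y x" unfolding prod_dist_def
    by (simp add: shift_dist_sym dist_commute)
  have "prod_dist p x y = 0 \<longleftrightarrow> shift_dist p (fst x) (fst y) = 0 \<and> dist (snd x) (snd y) = 0"
    unfolding prod_dist_def using shift_dist_nonneg[of p "fst x" "fst y"] zero_le_dist[of "snd x" "snd y"]
    by (auto simp: max_def)
  then show "prod_dist p x y = 0 \<longleftrightarrow> x = y"
    using shift_dist_zero[OF assms] by (auto simp: prod_eq_iff)
next
  fix x y z :: "(nat \<Rightarrow> nat) \<times> 'a"
  have "shift_dist p (fst x) (fst z) \<le> shift_dist p (fst x) (fst y) + shift_dist p (fst y) (fst z)"
    using shift_dist_ultra[OF assms, of "fst x" "fst z" "fst y"]
      shift_dist_nonneg[of p "fst x" "fst y"] shift_dist_nonneg[of p "fst y" "fst z"] by linarith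
  moreover have "dist (snd x) (snd z) \<le> dist (snd x) (snd y) + dist (snd y) (snd z)"
    by (rule dist_triangle)
  ultimately show "prod_dist p x z \<le> prod_dist p x y + prod_dist p y z"
    unfolding prod_dist_def by (smt (verit) max.cobounded1 max.cobounded2 max_def)
qed

lemma shift_dist_bound:
  assumes "\<forall>k<N. w k = \<omega> k" "p \<ge> 2"
  shows "shift_dist p \<omega> w \<le> real p powr (- (real N + 1))"
proof (cases "\<omega> = w")
  case True then show ?thesis by (simp add: shift_dist_def)
next
  case False
  then obtain k where k: "\<omega> k \<noteq> w k" by auto
  have "N \<le> (LEAST k. \<omega> k \<noteq> w k)"
  proof (rule ccontr)
    assume "\<not> N \<le> (LEAST k. \<omega> k \<noteq> w k)"
    then have "w (LEAST k. \<omega> k \<noteq> w k) = \<omega> (LEAST k. \<omega> k \<noteq> w k)" using assms(1) by auto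
    moreover have "\<omega> (LEAST k. \<omega> k \<noteq> w k) \<noteq> w (LEAST k. \<omega> k \<noteq> w k)" using k by (rule LeastI)
    ultimately show False by simp
  qed
  then show ?thesis using False assms(2) by (simp add: shift_dist_def powr_mono)
qed

lemma fst_iter: "fst ((skew g ^^ k) z) = (\<lambda>j. fst z (j + k))"
  by (induction k) (auto simp: skew_def shift_def)

lemma shift_dist_0:
  assumes "a 0 \<noteq> b 0"
  shows "shift_dist p a b = real p powr (-1)"
proof -
  have "a \<noteq> b" using assms by auto
  moreover have "(LEAST k. a k \<noteq> b k) = 0" using assms by (simp add: Least_eq_0)
  ultimately show ?thesis by (simp add: shift_dist_def)
qed

theorem mainTheorem6:
  fixes X :: "'a::metric_space set" and g :: "nat \<Rightarrow> 'a \<Rightarrow> 'a" and p :: nat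
  assumes "compact X"
    and "p \<ge> 2"
    and "\<And>i. i \<in> {1..p} \<Longrightarrow> continuous_on X (g i)"
    and "\<And>i. i \<in> {1..p} \<Longrightarrow> g i ` X \<subseteq> X"
  shows "entropy_points (Sigma_p p \<times> X) (prod_dist p) (skew g) = Sigma_p p \<times> X"
proof
  show "entropy_points (Sigma_p p \<times> X) (prod_dist p) (skew g) \<subseteq> Sigma_p p \<times> X"
    unfolding entropy_points_def by auto
next
  show "Sigma_p p \<times> X \<subseteq> entropy_points (Sigma_p p \<times> X) (prod_dist p) (skew g)"
  proof
    fix z assume zS: "z \<in> Sigma_p p \<times> X"
    obtain \<omega> x where z: "z = (\<omega>, x)" by fastforce
    have \<omega>S: "\<omega> \<in> Sigma_p p" and xX: "x \<in> X" using zS z by auto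
    have p1: "real p > 1" using assms(2) by simp
    show "z \<in> entropy_points (Sigma_p p \<times> X) (prod_dist p) (skew g)"
      unfolding entropy_points_def
    proof (intro CollectI conjI allI impI zS)
      fix F
      assume "closedin (Metric_space.mtopology (Sigma_p p \<times> X) (prod_dist p)) F \<and>
         (\<exists>U. openin (Metric_space.mtopology (Sigma_p p \<times> X) (prod_dist p)) U \<and> z \<in> U \<and> U \<subseteq> F)"
      then obtain U where U: "openin (Metric_space.mtopology (Sigma_p p \<times> X) (prod_dist p)) U"
        "z \<in> U" "U \<subseteq> F" by blast
      obtain r where r: "r > 0" "Metric_space.mball (Sigma_p p \<times> X) (prod_dist p) z r \<subseteq> U"
        using mtop_ball[OF MS[OF assms(2)] U(1,2)] by blast
      obtain N where N: "(1 / real p) ^ N < r"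
        using real_arch_pow_inv[OF r(1), of "1 / real p"] p1 by auto
      have pN: "real p powr (- (real N + 1)) < r"
      proof -
        have e1: "real p powr (real (Suc N)) = real p ^ Suc N" by (rule powr_realpow) (use p1 in simp)
        have "- (real N + 1) = - real (Suc N)" by simp
        then have "real p powr (- (real N + 1)) = inverse (real p powr (real (Suc N)))"
          by (simp only: powr_minus)
        also have "\<dots> = (1 / real p) ^ (Suc N)" unfolding e1 using p1 by (simp add: power_one_over field_simps)
        finally have "real p powr (- (real N + 1)) = (1 / real p) ^ (Suc N)" .
        also have "\<dots> \<le> (1 / real p) ^ N"
          using p1 by (intro power_decreasing) auto
        finally show ?thesis using N by linarith
      qed
      define \<epsilon>0 :: real where "\<epsilon>0 = 1 / (2 * real p)"
      have \<epsilon>0: "\<epsilon>0 > 0" using p1 by (simp add: \<epsilon>0_def)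
      define L where "L = (\<lambda>\<epsilon>. limsup (\<lambda>n. ln_ereal (sep_num (prod_dist p) (skew g) F n \<epsilon>) / ereal (real n)))"
      have sepb: "sep_num (prod_dist p) (skew g) F n \<epsilon>0 \<ge> ereal (real p ^ (n - N))" for n
      proof -
        define exq where "exq = (\<lambda>f::nat\<Rightarrow>nat. \<lambda>k. if N \<le> k \<and> k < n then f k else \<omega> k)"
        define P where "P = PiE {N..<n} (\<lambda>_. {1..p})"
        define E where "E = (\<lambda>w. (w, x)) ` (exq ` P)"
        have injx: "inj_on exq P"
        proof
          fix f f' assume f: "f \<in> P" "f' \<in> P" "exq f = exq f'"
          show "f = f'"
          proof
            fix k show "f k = f' k"
            proof (cases "k \<in> {N..<n}")
              case True
              have "exq f k = exq f' k" using f(3) by simp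
              then show ?thesis using True unfolding exq_def by simp
            next
              case False then show ?thesis
                using PiE_arb[OF f(1)[unfolded P_def] False] PiE_arb[OF f(2)[unfolded P_def] False] by simp
            qed
          qed
        qed
        have cardE: "card E = p ^ (n - N)"
        proof -
          have "card E = card (exq ` P)" unfolding E_def by (rule card_image) (simp add: inj_on_def)
          also have "\<dots> = card P" using injx by (rule card_image)
          also have "\<dots> = p ^ (n - N)" unfolding P_def by (simp add: card_PiE)
          finally show ?thesis .
        qed
        have finE: "finite E" unfolding E_def P_def by (intro finite_imageI finite_PiE) auto
        have EF: "E \<subseteq> F"
        proof
          fix e assume "e \<in> E"
          then obtain f where f: "f \<in> P" and e: "e = (exq f, x)" unfolding E_def by auto
          have "exq f \<in> Sigma_p p"
            unfolding Sigma_p_def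
          proof (safe)
            fix k show "exq f k \<in> {1..p}"
            proof (cases "k \<in> {N..<n}")
              case True then show ?thesis
                using PiE_mem[OF f[unfolded P_def] True] unfolding exq_def by simp
            next
              case False then show ?thesis using \<omega>S unfolding exq_def Sigma_p_def by auto
            qed
          qed
          moreover have "shift_dist p \<omega> (exq f) \<le> real p powr (- (real N + 1))"
            by (rule shift_dist_bound) (use assms(2) in \<open>auto simp: exq_def\<close>)
          moreover have "shift_dist p \<omega> (exq f) \<ge> 0" by (simp add: shift_dist_def)
          ultimately have "e \<in> Metric_space.mball (Sigma_p p \<times> X) (prod_dist p) z r"
            using pN zS xX unfolding Metric_space.in_mball[OF MS[OF assms(2)]] e z prod_dist_def by auto
          then show "e \<in> F" using r(2) U(3) by blast
        qed
        have sepE: "separated (prod_dist p) (skew g) n \<epsilon>0 E"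
          unfolding separated_def
        proof (intro ballI impI)
          fix e1 e2 assume "e1 \<in> E" "e2 \<in> E" "e1 \<noteq> e2"
          then obtain f1 f2 where e: "e1 = (exq f1, x)" "e2 = (exq f2, x)" "exq f1 \<noteq> exq f2"
            unfolding E_def by auto
          then obtain k where k: "exq f1 k \<noteq> exq f2 k" by auto
          then have kr: "k < n" by (auto simp: exq_def split: if_splits)
          have "fst ((skew g ^^ k) e1) 0 \<noteq> fst ((skew g ^^ k) e2) 0"
            using k by (simp add: fst_iter e)
          then have "shift_dist p (fst ((skew g ^^ k) e1)) (fst ((skew g ^^ k) e2)) = real p powr (-1)"
            by (rule shift_dist_0)
          also have "real p powr (-1) = 1 / real p" using p1 by (simp add: powr_minus divide_inverse)
          also have "\<dots> > \<epsilon>0" using p1 by (simp add: \<epsilon>0_def field_simps)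
          finally have "prod_dist p ((skew g ^^ k) e1) ((skew g ^^ k) e2) > \<epsilon>0"
            unfolding prod_dist_def by linarith
          then show "\<exists>k<n. prod_dist p ((skew g ^^ k) e1) ((skew g ^^ k) e2) > \<epsilon>0"
            using kr by blast
        qed
        have "ereal (real (card E)) \<le> sep_num (prod_dist p) (skew g) F n \<epsilon>0"
          unfolding sep_num_def by (rule Sup_upper) (use finE EF sepE in blast)
        then show ?thesis using cardE by simp
      qed
      have termb: "ln_ereal (sep_num (prod_dist p) (skew g) F n \<epsilon>0) / ereal (real n) \<ge> ereal (ln (real p) / 2)"
        if n: "n \<ge> 2 * N + 1" for n
      proof -
        let ?s = "sep_num (prod_dist p) (skew g) F n \<epsilon>0"
        have lnb: "ln_ereal ?s \<ge> ereal (real (n - N) * ln (real p))"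
        proof (cases "?s = \<infinity>")
          case True then show ?thesis by (simp add: ln_ereal_def)
        next
          case False
          have ge: "ereal (real p ^ (n - N)) \<le> ?s" by (rule sepb)
          have pos: "real p ^ (n - N) > 0" using p1 by simp
          then obtain s where s: "?s = ereal s" using False ge
            by (cases ?s) auto
          have "s \<ge> real p ^ (n - N)" using ge s by simp
          have s0: "s > 0" using pos \<open>s \<ge> _\<close> by linarith
          have "ln s \<ge> ln (real p ^ (n - N))" using pos s0 \<open>s \<ge> _\<close> by (simp only: ln_le_cancel_iff)
          then show ?thesis using s pos s0 by (simp add: ln_ereal_def ln_realpow)
        qed
        have npos: "real n > 0" using n by simp
        have "ereal (ln (real p) / 2) \<le> ereal (real (n - N) * ln (real p) / real n)"
        proof -
          have h1: "real (n - N) / real n \<ge> 1 / 2" using n npos by (simp add: field_simps)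
          have h2: "ln (real p) > 0" using p1 by simp
          have "1 / 2 * ln (real p) \<le> real (n - N) / real n * ln (real p)"
            by (rule mult_right_mono[OF h1 less_imp_le[OF h2]])
          then show ?thesis by simp
        qed
        also have "\<dots> = ereal (real (n - N) * ln (real p)) / ereal (real n)"
          using npos by (simp add: ereal_divide)
        also have "\<dots> \<le> ln_ereal ?s / ereal (real n)"
          using lnb npos by (intro ereal_divide_right_mono) auto
        finally show ?thesis .
      qed
      have L0: "L \<epsilon>0 > 0"
      proof -
        have "ereal (ln (real p) / 2) \<le> L \<epsilon>0"
        proof -
          have "limsup (\<lambda>n::nat. ereal (ln (real p) / 2)) \<le> L \<epsilon>0"
            unfolding L_def by (rule Limsup_mono) (use termb in \<open>auto simp: eventually_sequentially\<close>)
          then show ?thesis by (simp add: Limsup_const)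
        qed
        moreover have "ln (real p) / 2 > 0" using p1 by simp
        ultimately show ?thesis by (meson ereal_less(2) less_le_trans zero_ereal_def)
      qed
      have mono: "L \<epsilon>2 \<le> L \<epsilon>1" if "\<epsilon>1 \<le> \<epsilon>2" for \<epsilon>1 \<epsilon>2
      proof -
        have "sep_num (prod_dist p) (skew g) F n \<epsilon>2 \<le> sep_num (prod_dist p) (skew g) F n \<epsilon>1" for n
          unfolding sep_num_def
        proof (rule Sup_subset_mono, safe)
          fix E assume "finite E" "E \<subseteq> F" "separated (prod_dist p) (skew g) n \<epsilon>2 E"
          moreover have "separated (prod_dist p) (skew g) n \<epsilon>1 E"
            using \<open>separated _ _ n \<epsilon>2 E\<close> that unfolding separated_def by (meson le_less_trans)
          ultimately show "\<exists>E'. ereal (real (card E)) = ereal (real (card E')) \<and> finite E' \<and> E' \<subseteq> F \<and> separated (prod_dist p) (skew g) n \<epsilon>1 E'"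
            by blast
        qed
        moreover have "mono ln_ereal"
          unfolding mono_def using ln_ereal_mono by blast
        ultimately have "\<forall>n. ln_ereal (sep_num (prod_dist p) (skew g) F n \<epsilon>2) / ereal (real n)
            \<le> ln_ereal (sep_num (prod_dist p) (skew g) F n \<epsilon>1) / ereal (real n) \<or> n = 0"
          by (auto intro!: ereal_divide_right_mono monoD[of ln_ereal])
        then show ?thesis unfolding L_def
          by (intro Limsup_mono) (auto simp: eventually_sequentially intro: exI[of _ 1])
      qed
      define S where "S = (SUP \<epsilon>\<in>{0<..}. L \<epsilon>)"
      have lim: "(L \<longlongrightarrow> S) (at_right 0)"
      proof (rule order_tendstoI)
        fix a assume "a < S"
        then obtain e where e: "e > 0" "a < L e" unfolding S_def by (auto simp: less_SUP_iff)
        show "\<forall>\<^sub>F \<epsilon> in at_right 0. a < L \<epsilon>"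
          unfolding eventually_at_right_field
          by (rule exI[of _ e]) (use e mono in \<open>auto intro: less_le_trans\<close>)
      next
        fix a assume "S < a"
        show "\<forall>\<^sub>F \<epsilon> in at_right 0. L \<epsilon> < a"
          unfolding eventually_at_right_field
        proof (rule exI[of _ 1], safe)
          fix y :: real assume "0 < y"
          then have "L y \<le> S" unfolding S_def by (auto intro: SUP_upper)
          then show "L y < a" using \<open>S < a\<close> by simp
        qed simp
      qed
      have "htop (prod_dist p) (skew g) F = S"
        unfolding htop_def L_def[symmetric] by (rule tendsto_Lim) (use lim in auto)
      moreover have "L \<epsilon>0 \<le> S" unfolding S_def using \<epsilon>0 by (auto intro: SUP_upper)
      ultimately show "htop (prod_dist p) (skew g) F > 0" using L0 by simp
    qed
  qed
qed

end
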